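(* Let $\delta_j,\delta_k$ be coprime integers with $1<\delta_j<\delta_k$, let $r=\delta_k\bmod\delta_j$ and let $f\colon \mathcal B(\delta_j,r)\to\mathcal B(\delta_k,\delta_j)$, $f(x',y')=(y',\,x'-y'\lfloor \delta_k/\delta_j\rfloor)$. Then the irreducible elements of $\mathcal B(\delta_k,\delta_j)\cap f(\mathcal B(\delta_j,r))$ are exactly the images $f(\mathbf x')$ of the irreducible elements $\mathbf x'$ of $\mathcal B(\delta_j,r)$.
   Context: For coprime positive integers $p,q$ and $i\in\{1,\ldots,\max\{p,q\}\}$, the $\lambda$-B\'ezout couple $\boldsymbol\lambda_i$ of $i$ for $(p,q)$ is the unique $(x,y)\in\mathbb Z^2$ with $xp+yq=i$ and $0<y\le p$, and the $\mu$-B\'ezout couple $\boldsymbol\mu_i$ of $i$ for $(p,q)$ is the unique $(x,y)\in\mathbb Z^2$ with $xp+yq=i$ and $0<x\le q$. $\mathcal B(p,q)$ denotes the set of all $\lambda$- and $\mu$-B\'ezout couples for $(p,q)$. $\boldsymbol\lambda_i$ is irreducible if there are no $j,k\in\{1,\ldots,\max\{p,q\}\}$ with $\boldsymbol\lambda_i=\boldsymbol\lambda_j+\boldsymbol\lambda_k$; likewise $\boldsymbol\mu_i$ is irreducible if there are no such $j,k$ with $\boldsymbol\mu_i=\boldsymbol\mu_j+\boldsymbol\mu_k$. *)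

theory Defs
  imports Main
begin

definition lam_couple :: "int \<Rightarrow> int \<Rightarrow> int \<Rightarrow> int \<times> int" where
  "lam_couple p q i = (THE c. fst c * p + snd c * q = i \<and> 0 < snd c \<and> snd c \<le> p)"

definition mu_couple :: "int \<Rightarrow> int \<Rightarrow> int \<Rightarrow> int \<times> int" where
  "mu_couple p q i = (THE c. fst c * p + snd c * q = i \<and> 0 < fst c \<and> fst c \<le> q)"

definition bezout_set :: "int \<Rightarrow> int \<Rightarrow> (int \<times> int) set" where
  "bezout_set p q = lam_couple p q ` {1..max p q} \<union> mu_couple p q ` {1..max p q}"

definition lam_irreducible :: "int \<Rightarrow> int \<Rightarrow> int \<Rightarrow> bool" where
  "lam_irreducible p q i \<longleftrightarrow>
     \<not> (\<exists>j\<in>{1..max p q}. \<exists>k\<in>{1..max p q}.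
          fst (lam_couple p q i) = fst (lam_couple p q j) + fst (lam_couple p q k) \<and>
          snd (lam_couple p q i) = snd (lam_couple p q j) + snd (lam_couple p q k))"

definition mu_irreducible :: "int \<Rightarrow> int \<Rightarrow> int \<Rightarrow> bool" where
  "mu_irreducible p q i \<longleftrightarrow>
     \<not> (\<exists>j\<in>{1..max p q}. \<exists>k\<in>{1..max p q}.
          fst (mu_couple p q i) = fst (mu_couple p q j) + fst (mu_couple p q k) \<and>
          snd (mu_couple p q i) = snd (mu_couple p q j) + snd (mu_couple p q k))"

definition irreducible_elems :: "int \<Rightarrow> int \<Rightarrow> (int \<times> int) set" where
  "irreducible_elems p q =
     {lam_couple p q i | i. i \<in> {1..max p q} \<and> lam_irreducible p q i} \<union>
     {mu_couple p q i | i. i \<in> {1..max p q} \<and> mu_irreducible p q i}"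

end

theory Submission
  imports Defs
begin


lemma bez_ex:
  fixes p q i :: int
  assumes cp: "coprime p q" and p: "0 < p"
  shows "\<exists>x y. x * p + y * q = i \<and> 0 < y \<and> y \<le> p"
proof -
  obtain u v where uv: "u * p + v * q = 1"
    using bezout_int[of p q] cp by (metis coprime_iff_gcd_eq_1)
  define y0 where "y0 = (i * v) mod p"
  define y where "y = (if y0 = 0 then p else y0)"
  have y0: "0 \<le> y0" "y0 < p" using p by (simp_all add: y0_def)
  have yr: "0 < y" "y \<le> p" using y0 by (auto simp: y_def)
  have "p dvd (y - i * v)"
  proof -
    have "p dvd (y0 - i * v)" unfolding y0_def using mod_eq_dvd_iff[of "i * v mod p" p "i * v"] by simp
    moreover have "y - i * v = (y0 - i * v) + (if y0 = 0 then p else 0)" by (simp add: y_def)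
    moreover have "p dvd (if y0 = 0 then p else 0)" by simp
    ultimately show ?thesis by (metis dvd_add)
  qed
  then obtain k where k: "y - i * v = p * k" by (auto elim: dvdE)
  have "i - y * q = p * (i * u - k * q)"
  proof -
    have "i * (u * p + v * q) = i" using uv by simp
    then have e: "i = i*u*p + i*v*q" by (simp add: algebra_simps)
    have y: "y = i*v + p*k" using k by simp
    have "i - y * q = (i*u*p + i*v*q) - (i*v + p*k)*q" using e y by simp
    also have "\<dots> = p * (i * u - k * q)" by (simp add: algebra_simps)
    finally show ?thesis .
  qed
  then have "(i * u - k * q) * p + y * q = i" by (simp add: algebra_simps)
  then show ?thesis using yr by blast
qed


lemma bez_uniq:
  fixes p q :: int
  assumes cp: "coprime p q" and p: "0 < p"
    and a: "x1 * p + y1 * q = i" "0 < y1" "y1 \<le> p"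
    and b: "x2 * p + y2 * q = i" "0 < y2" "y2 \<le> p"
  shows "x1 = x2 \<and> y1 = y2"
proof -
  have "(y1 - y2) * q = (x2 - x1) * p" using a b by (simp add: algebra_simps)
  then have "p dvd (y1 - y2) * q" by simp
  then have "p dvd (y1 - y2)" using cp coprime_dvd_mult_left_iff by blast
  then obtain k where k: "y1 - y2 = p * k" by (auto elim: dvdE)
  have "k = 0"
  proof (rule ccontr)
    assume "k \<noteq> 0"
    then have "k \<ge> 1 \<or> k \<le> -1" by linarith
    then have "p * k \<ge> p * 1 \<or> p * k \<le> p * (-1)" using p
      by (meson less_imp_le mult_left_mono)
    then show False using k a b by linarith
  qed
  then have "y1 = y2" using k by simp
  moreover have "x1 * p = x2 * p" using a b \<open>y1 = y2\<close> by (metis add_right_cancel)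
  ultimately show ?thesis using p by simp
qed



definition bval :: "int \<Rightarrow> int \<Rightarrow> int \<times> int \<Rightarrow> int" where
  "bval p q c = fst c * p + snd c * q"

definition LS :: "int \<Rightarrow> int \<Rightarrow> (int \<times> int) set" where
  "LS p q = {c. 1 \<le> bval p q c \<and> bval p q c \<le> max p q \<and> 0 < snd c \<and> snd c \<le> p}"

definition US :: "int \<Rightarrow> int \<Rightarrow> (int \<times> int) set" where
  "US p q = {c. 1 \<le> bval p q c \<and> bval p q c \<le> max p q \<and> 0 < fst c \<and> fst c \<le> q}"

definition irr :: "(int \<times> int) set \<Rightarrow> (int \<times> int) set" where
  "irr S = {c \<in> S. \<not> (\<exists>d\<in>S. \<exists>e\<in>S. c = (fst d + fst e, snd d + snd e))}"

lemma lam_eq: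
  assumes "coprime p q" "0 < p" "fst c * p + snd c * q = i" "0 < snd c" "snd c \<le> p"
  shows "lam_couple p q i = c"
  unfolding lam_couple_def
proof (rule the_equality)
  show "fst c * p + snd c * q = i \<and> 0 < snd c \<and> snd c \<le> p" using assms by simp
  fix c' assume "fst c' * p + snd c' * q = i \<and> 0 < snd c' \<and> snd c' \<le> p"
  then show "c' = c" using bez_uniq[OF assms(1,2), of "fst c'" "snd c'" i "fst c" "snd c"] assms
    by (simp add: prod_eq_iff)
qed

lemma lam_prop:
  assumes "coprime p q" "0 < p"
  shows "fst (lam_couple p q i) * p + snd (lam_couple p q i) * q = i \<and> 0 < snd (lam_couple p q i) \<and> snd (lam_couple p q i) \<le> p"
proof -
  obtain x y where "x * p + y * q = i \<and> 0 < y \<and> y \<le> p" using bez_ex[OF assms] by blast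
  then have "lam_couple p q i = (x, y)" using lam_eq[OF assms, of "(x,y)"] by simp
  then show ?thesis using \<open>x * p + y * q = i \<and> 0 < y \<and> y \<le> p\<close> by simp
qed

lemma mu_eq:
  assumes "coprime p q" "0 < q" "fst c * p + snd c * q = i" "0 < fst c" "fst c \<le> q"
  shows "mu_couple p q i = c"
  unfolding mu_couple_def
proof (rule the_equality)
  show "fst c * p + snd c * q = i \<and> 0 < fst c \<and> fst c \<le> q" using assms by simp
  fix c' assume a: "fst c' * p + snd c' * q = i \<and> 0 < fst c' \<and> fst c' \<le> q"
  have cp: "coprime q p" using assms(1) by (simp add: coprime_commute)
  have "snd c' * q + fst c' * p = i" "snd c * q + fst c * p = i" using a assms by (simp_all add: add.commute)
  then show "c' = c" using bez_uniq[OF cp assms(2), of "snd c'" "fst c'" i "snd c" "fst c"] assms a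
    by (simp add: prod_eq_iff)
qed

lemma mu_prop:
  assumes "coprime p q" "0 < q"
  shows "fst (mu_couple p q i) * p + snd (mu_couple p q i) * q = i \<and> 0 < fst (mu_couple p q i) \<and> fst (mu_couple p q i) \<le> q"
proof -
  have cp: "coprime q p" using assms(1) by (simp add: coprime_commute)
  obtain x y where h: "x * q + y * p = i \<and> 0 < y \<and> y \<le> q" using bez_ex[OF cp assms(2)] by blast
  then have "mu_couple p q i = (y, x)" using mu_eq[OF assms, of "(y,x)"] by (simp add: add.commute)
  then show ?thesis using h by (simp add: add.commute)
qed

lemma lam_img:
  assumes "coprime p q" "0 < p"
  shows "lam_couple p q ` {1..max p q} = LS p q"
proof
  show "lam_couple p q ` {1..max p q} \<subseteq> LS p q"
    using lam_prop[OF assms] by (auto simp: LS_def bval_def)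
  show "LS p q \<subseteq> lam_couple p q ` {1..max p q}"
  proof
    fix c assume c: "c \<in> LS p q"
    then have "lam_couple p q (bval p q c) = c" using lam_eq[OF assms] by (simp add: LS_def bval_def)
    moreover have "bval p q c \<in> {1..max p q}" using c by (simp add: LS_def)
    ultimately show "c \<in> lam_couple p q ` {1..max p q}" by (metis imageI)
  qed
qed

lemma mu_img:
  assumes "coprime p q" "0 < q"
  shows "mu_couple p q ` {1..max p q} = US p q"
proof
  show "mu_couple p q ` {1..max p q} \<subseteq> US p q"
    using mu_prop[OF assms] by (auto simp: US_def bval_def)
  show "US p q \<subseteq> mu_couple p q ` {1..max p q}"
  proof
    fix c assume c: "c \<in> US p q"
    then have "mu_couple p q (bval p q c) = c" using mu_eq[OF assms] by (simp add: US_def bval_def)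
    moreover have "bval p q c \<in> {1..max p q}" using c by (simp add: US_def)
    ultimately show "c \<in> mu_couple p q ` {1..max p q}" by (metis imageI)
  qed
qed

lemma irr_of_image:
  "{g i |i. i \<in> R \<and> \<not> (\<exists>j\<in>R. \<exists>k\<in>R. fst (g i) = fst (g j) + fst (g k) \<and> snd (g i) = snd (g j) + snd (g k))}
   = irr (g ` R)"
  unfolding irr_def by (auto simp: prod_eq_iff)

lemma irr_elems:
  assumes "coprime p q" "0 < p" "0 < q"
  shows "irreducible_elems p q = irr (LS p q) \<union> irr (US p q)"
proof -
  have "irreducible_elems p q = irr (lam_couple p q ` {1..max p q}) \<union> irr (mu_couple p q ` {1..max p q})"
    unfolding irreducible_elems_def lam_irreducible_def mu_irreducible_def irr_of_image[symmetric] by simp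
  then show ?thesis using lam_img[OF assms(1,2)] mu_img[OF assms(1,3)] by simp
qed

lemma bez_set:
  assumes "coprime p q" "0 < p" "0 < q"
  shows "bezout_set p q = LS p q \<union> US p q"
  unfolding bezout_set_def using lam_img[OF assms(1,2)] mu_img[OF assms(1,3)] by simp



lemma K2_fwd:
  fixes x y P Q a r :: int
  assumes P: "P = a * Q + r" and a: "0 \<le> a" and r: "0 < r" "r < Q"
    and v1: "1 \<le> x * P + y * Q" and v2: "x * P + y * Q \<le> Q" and y: "0 < y" "y \<le> P"
  shows "0 < y + x * a \<and> y + x * a \<le> r"
proof -
  have Q: "0 < Q" using r by simp
  have Pp: "0 < P" using P a r Q by (smt (verit) mult_nonneg_nonneg)
  have "y * Q \<ge> 1 * Q" using y Q by (intro mult_right_mono) auto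
  then have "x * P \<le> 0" using v2 by simp
  then have x0: "x \<le> 0" using Pp by (smt (verit) mult_pos_pos)
  have "y * Q \<le> P * Q" using y Q by (intro mult_right_mono) auto
  then have "x * P > - Q * P" using v1 by (simp add: algebra_simps)
  then have "(x + Q) * P > 0" by (simp add: algebra_simps)
  then have x1: "x \<ge> 1 - Q" using Pp by (smt (verit) mult_nonpos_nonneg)
  have e: "(y + x * a) * Q = x * P + y * Q - x * r" using P by (simp add: algebra_simps)
  have "x * r \<le> 0" using x0 r by (simp add: mult_nonpos_nonneg)
  then have "(y + x * a) * Q \<ge> 1" using e v1 by simp
  then have g1: "0 < y + x * a" using Q by (smt (verit) mult_nonpos_nonneg)
  have "x * r \<ge> (1 - Q) * r" using x1 r by (intro mult_right_mono) auto
  then have "(y + x * a) * Q \<le> Q - (1 - Q) * r" using e v2 by linarith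
  moreover have "Q - (1 - Q) * r < (r + 1) * Q" using r by (simp add: algebra_simps)
  ultimately have "(y + x * a) * Q < (r + 1) * Q" by linarith
  then have "y + x * a < r + 1" using Q by (simp add: mult_less_cancel_right)
  then show ?thesis using g1 by simp
qed

lemma K2_bwd:
  fixes x y P Q a r :: int
  assumes P: "P = a * Q + r" and a: "0 \<le> a" and r: "0 < r" "r < Q"
    and v1: "1 \<le> x * P + y * Q" and v2: "x * P + y * Q \<le> Q" and g: "0 < y + x * a" "y + x * a \<le> r"
  shows "0 < y \<and> y \<le> P"
proof -
  have Q: "0 < Q" using r by simp
  define x' where "x' = y + x * a"
  have e: "x * P + y * Q = x' * Q + x * r" using P by (simp add: x'_def algebra_simps)
  have "x' * Q \<ge> 1 * Q" using g Q by (intro mult_right_mono) (auto simp: x'_def)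
  then have "x * r \<le> 0" using v2 e by simp
  then have x0: "x \<le> 0" using r by (smt (verit) mult_pos_pos)
  have "x' * Q \<le> r * Q" using g Q by (intro mult_right_mono) (auto simp: x'_def)
  then have "x * r > - Q * r" using v1 e by (simp add: algebra_simps)
  then have "(x + Q) * r > 0" by (simp add: algebra_simps)
  then have x1: "x \<ge> 1 - Q" using r by (smt (verit) mult_nonpos_nonneg)
  have xa: "x * a \<le> 0" using x0 a by (simp add: mult_nonpos_nonneg)
  have "x * a \<ge> (1 - Q) * a" using x1 a by (intro mult_right_mono) auto
  then have "y \<le> r - (1 - Q) * a" using g by simp
  then have "y \<le> P - a" using P by (simp add: algebra_simps)
  then show ?thesis using g xa a by simp
qed



lemma bij_img:
  assumes "\<And>w. G (F w) = w" "\<And>c. F (G c) = c"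
  shows "F ` S = {c. G c \<in> S}"
proof
  show "F ` S \<subseteq> {c. G c \<in> S}" using assms by auto
  show "{c. G c \<in> S} \<subseteq> F ` S"
  proof
    fix c assume "c \<in> {c. G c \<in> S}"
    then have "G c \<in> S" by simp
    then have "F (G c) \<in> F ` S" by (rule imageI)
    then show "c \<in> F ` S" using assms(2) by simp
  qed
qed

lemma irr_image:
  assumes inj: "inj F"
    and add: "\<And>d e. F (fst d + fst e, snd d + snd e) = (fst (F d) + fst (F e), snd (F d) + snd (F e))"
  shows "irr (F ` S) = F ` irr S"
proof
  show "irr (F ` S) \<subseteq> F ` irr S"
  proof
    fix c assume c: "c \<in> irr (F ` S)"
    then obtain w where w: "w \<in> S" "c = F w" by (auto simp: irr_def)
    have "w \<in> irr S"
    proof (rule ccontr)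
      assume "w \<notin> irr S"
      then obtain d e where de: "d \<in> S" "e \<in> S" "w = (fst d + fst e, snd d + snd e)"
        using w by (auto simp: irr_def)
      then have "c = (fst (F d) + fst (F e), snd (F d) + snd (F e))" using w add by simp
      then show False using c de by (auto simp: irr_def)
    qed
    then show "c \<in> F ` irr S" using w by simp
  qed
  show "F ` irr S \<subseteq> irr (F ` S)"
  proof
    fix c assume "c \<in> F ` irr S"
    then obtain w where w: "w \<in> irr S" "c = F w" by auto
    have "\<not> (\<exists>d\<in>F ` S. \<exists>e\<in>F ` S. c = (fst d + fst e, snd d + snd e))"
    proof
      assume "\<exists>d\<in>F ` S. \<exists>e\<in>F ` S. c = (fst d + fst e, snd d + snd e)"
      then obtain d e where de: "d \<in> S" "e \<in> S" "c = (fst (F d) + fst (F e), snd (F d) + snd (F e))"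
        by auto
      then have "F w = F (fst d + fst e, snd d + snd e)" using w add by simp
      then have "w = (fst d + fst e, snd d + snd e)" using inj by (simp add: inj_eq)
      then show False using w de by (auto simp: irr_def)
    qed
    moreover have "c \<in> F ` S" using w by (auto simp: irr_def)
    ultimately show "c \<in> irr (F ` S)" by (simp add: irr_def)
  qed
qed

lemma irr_restrict:
  fixes g :: "int \<times> int \<Rightarrow> int"
  assumes pos: "\<And>c. c \<in> S \<Longrightarrow> 1 \<le> g c"
    and add: "\<And>d e. g (fst d + fst e, snd d + snd e) = g d + g e"
  shows "irr S \<inter> {c. g c \<le> Q} = irr (S \<inter> {c. g c \<le> Q})"
proof
  show "irr S \<inter> {c. g c \<le> Q} \<subseteq> irr (S \<inter> {c. g c \<le> Q})"
    unfolding irr_def by auto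
  show "irr (S \<inter> {c. g c \<le> Q}) \<subseteq> irr S \<inter> {c. g c \<le> Q}"
  proof
    fix c assume c: "c \<in> irr (S \<inter> {c. g c \<le> Q})"
    have "\<not> (\<exists>d\<in>S. \<exists>e\<in>S. c = (fst d + fst e, snd d + snd e))"
    proof
      assume "\<exists>d\<in>S. \<exists>e\<in>S. c = (fst d + fst e, snd d + snd e)"
      then obtain d e where de: "d \<in> S" "e \<in> S" "c = (fst d + fst e, snd d + snd e)" by auto
      have "g c = g d + g e" using de add by simp
      moreover have "g c \<le> Q" using c by (simp add: irr_def)
      moreover have "1 \<le> g d" "1 \<le> g e" using pos de by auto
      ultimately have "g d \<le> Q" "g e \<le> Q" by linarith+
      then show False using c de by (auto simp: irr_def)
    qed
    then show "c \<in> irr S \<inter> {c. g c \<le> Q}" using c by (auto simp: irr_def)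
  qed
qed



lemma irr_sub: "irr S \<subseteq> S" by (auto simp: irr_def)

theorem proposition3p10:
  fixes dj dk :: int
  assumes "coprime dj dk" and "1 < dj" and "dj < dk"
  shows "irreducible_elems dk dj \<inter>
           (\<lambda>(x', y'). (y', x' - y' * (dk div dj))) ` bezout_set dj (dk mod dj)
         = (\<lambda>(x', y'). (y', x' - y' * (dk div dj))) ` irreducible_elems dj (dk mod dj)"
proof -
  define P where "P = dk"
  define Q where "Q = dj"
  define a where "a = dk div dj"
  define r where "r = dk mod dj"
  define F where "F = (\<lambda>(x'::int, y'::int). (y', x' - y' * a))"
  define G where "G = (\<lambda>c::int \<times> int. (snd c + fst c * a, fst c))"
  define V where "V = {c. bval P Q c \<le> Q}"
  have Q1: "1 < Q" and QP: "Q < P" using assms by (simp_all add: P_def Q_def)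
  have Pe: "P = a * Q + r" by (simp add: P_def Q_def a_def r_def)
  have r0: "0 \<le> r" "r < Q" using Q1 by (simp_all add: r_def Q_def)
  have a0: "0 \<le> a" using Q1 QP unfolding a_def P_def Q_def by (simp add: div_int_pos_iff)
  have cpPQ: "coprime P Q" using assms(1) by (simp add: P_def Q_def coprime_commute)
  have cpQr: "coprime Q r" using assms(1) Q1 by (simp add: r_def Q_def)
  have rpos: "0 < r"
  proof (rule ccontr)
    assume "\<not> 0 < r"
    then have "r = 0" using r0 by simp
    then have "coprime Q 0" using cpQr by simp
    then show False using Q1 by simp
  qed
  have Fe: "\<And>w. F w = (snd w, fst w - snd w * a)" by (simp add: F_def split_def)
  have GF: "\<And>w. G (F w) = w" by (simp add: Fe G_def)
  have FG: "\<And>c. F (G c) = c" by (simp add: Fe G_def)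
  have bvG: "\<And>c. bval Q r (G c) = bval P Q c"
    by (simp add: bval_def G_def Pe algebra_simps)
  have Gs: "\<And>c. fst (G c) = snd c + fst c * a" "\<And>c. snd (G c) = fst c" by (simp_all add: G_def)
  have mQr: "max Q r = Q" and mPQ: "max P Q = P" using r0 QP by auto
  have img1: "F ` LS Q r = US P Q \<inter> V"
  proof -
    have "F ` LS Q r = {c. G c \<in> LS Q r}" by (rule bij_img[OF GF FG])
    also have "\<dots> = US P Q \<inter> V"
      using QP by (auto simp: LS_def US_def V_def bvG mQr mPQ Gs)
    finally show ?thesis .
  qed
  have img2: "F ` US Q r = LS P Q \<inter> V"
  proof -
    have "F ` US Q r = {c. G c \<in> US Q r}" by (rule bij_img[OF GF FG])
    also have "\<dots> = LS P Q \<inter> V"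
    proof (rule set_eqI, rule iffI)
      fix c assume "c \<in> {c. G c \<in> US Q r}"
      then have h: "1 \<le> bval P Q c" "bval P Q c \<le> Q" "0 < snd c + fst c * a" "snd c + fst c * a \<le> r"
        by (auto simp: US_def bvG mQr Gs)
      have "0 < snd c \<and> snd c \<le> P"
        using K2_bwd[OF Pe a0 rpos r0(2), of "fst c" "snd c"] h by (simp add: bval_def)
      then show "c \<in> LS P Q \<inter> V" using h QP by (auto simp: LS_def V_def mPQ)
    next
      fix c assume "c \<in> LS P Q \<inter> V"
      then have h: "1 \<le> bval P Q c" "bval P Q c \<le> Q" "0 < snd c" "snd c \<le> P"
        by (auto simp: LS_def V_def)
      have "0 < snd c + fst c * a \<and> snd c + fst c * a \<le> r"
        using K2_fwd[OF Pe a0 rpos r0(2), of "fst c" "snd c"] h by (simp add: bval_def)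
      then show "c \<in> {c. G c \<in> US Q r}" using h
        by (auto simp: US_def bvG mQr Gs)
    qed
    finally show ?thesis .
  qed
  have injF: "inj F" by (metis GF injI)
  have addF: "\<And>d e. F (fst d + fst e, snd d + snd e) = (fst (F d) + fst (F e), snd (F d) + snd (F e))"
    by (simp add: Fe algebra_simps)
  have addb: "\<And>d e. bval P Q (fst d + fst e, snd d + snd e) = bval P Q d + bval P Q e"
    by (simp add: bval_def algebra_simps)
  have posL: "\<And>c. c \<in> LS P Q \<Longrightarrow> 1 \<le> bval P Q c" by (simp add: LS_def)
  have posU: "\<And>c. c \<in> US P Q \<Longrightarrow> 1 \<le> bval P Q c" by (simp add: US_def)
  have Pp: "0 < P" "0 < Q" "0 < r" using QP Q1 rpos by auto
  have "irreducible_elems P Q \<inter> F ` bezout_set Q r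
        = (irr (LS P Q) \<union> irr (US P Q)) \<inter> ((US P Q \<inter> V) \<union> (LS P Q \<inter> V))"
    using irr_elems[OF cpPQ Pp(1,2)] bez_set[OF cpQr Pp(2,3)] img1 img2 by (simp add: image_Un)
  also have "\<dots> = (irr (LS P Q) \<inter> V) \<union> (irr (US P Q) \<inter> V)"
    using irr_sub[of "LS P Q"] irr_sub[of "US P Q"] by blast
  also have "\<dots> = irr (LS P Q \<inter> V) \<union> irr (US P Q \<inter> V)"
    using irr_restrict[of "LS P Q" "bval P Q" Q, OF posL addb]
      irr_restrict[of "US P Q" "bval P Q" Q, OF posU addb] by (simp add: V_def)
  also have "\<dots> = irr (F ` US Q r) \<union> irr (F ` LS Q r)" using img1 img2 by simp
  also have "\<dots> = F ` irr (US Q r) \<union> F ` irr (LS Q r)"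
    using irr_image[OF injF addF] by simp
  also have "\<dots> = F ` irreducible_elems Q r"
    using irr_elems[OF cpQr Pp(2,3)] by (auto simp: image_Un)
  finally show ?thesis by (simp add: P_def Q_def F_def a_def r_def)
qed

end
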